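(* Let $S$ be a reduced affine monoid. Then $c(S)$ is the minimal non-negative integer $d$ such that the kernel of $\pi_R:R[x_a\mid a\in\mathcal{A}(S)]\to R[S]$ is generated as an ideal by binomials of degree at most $d$, for some commutative ring $R$ (with identity); moreover, for a given $d$ this condition holds for some commutative ring $R$ if and only if it holds for every commutative ring $R$.
   Context: A monoid is a commutative cancellative semigroup with identity, written multiplicatively; it is affine if it is a finitely generated submonoid of a finitely generated free abelian group, and reduced if the identity is its only invertible element. $\mathcal{A}(S)$ is the finite set of atoms of $S$; for $\alpha\in\mathbb{N}_0^{\mathcal{A}(S)}$ set $|\alpha|=\sum_a\alpha(a)$, $a^{\alpha}=\prod_a a^{\alpha(a)}$. The catenary degree $c(S)$: for $\alpha,\gamma\in\mathbb{N}_0^{\mathcal{A}(S)}$ let $\gcd(\alpha,\gamma)(a)=\min\{\alpha(a),\gamma(a)\}$ and $d(\alpha,\gamma)=\max\{|\alpha-\gcd(\alpha,\gamma)|,|\gamma-\gcd(\alpha,\gamma)|\}$; $c(S)$ is the minimal non-negative integer $d$ such that whenever $a^{\alpha}=a^{\gamma}$ there is a sequence $\alpha=\alpha^{(0)},\dots,\alpha^{(k)}=\gamma$ with $a^{\alpha^{(j)}}=a^{\alpha^{(j+1)}}$ and $d(\alpha^{(j)},\alpha^{(j+1)})\le d$ for all $j$. For a commutative ring $R$, $R[x_a\mid a\in\mathcal{A}(S)]$ is the polynomial ring with the standard grading ($\deg x_a=1$), $R[S]$ is the semigroup ring, and $\pi_R$ is the $R$-algebra homomorphism with $x^{\alpha}=\prod_a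 x_a^{\alpha(a)}\mapsto a^{\alpha}$. A binomial is an element $x^{\alpha}-x^{\gamma}$. *)

theory Defs
  imports "HOL-Library.Poly_Mapping"
begin

(* An affine monoid is modelled (up to isomorphism) as a finitely generated
   submonoid S of the free abelian group Z^n = ('n::finite => int), written additively. *)

inductive_set monoid_gen :: "('n \<Rightarrow> int) set \<Rightarrow> ('n \<Rightarrow> int) set" for G where
  zero: "(\<lambda>_. 0) \<in> monoid_gen G"
| add: "g \<in> G \<Longrightarrow> x \<in> monoid_gen G \<Longrightarrow> (\<lambda>i. g i + x i) \<in> monoid_gen G"

definition affine_monoid :: "('n::finite \<Rightarrow> int) set \<Rightarrow> bool" where
  "affine_monoid S \<longleftrightarrow> (\<exists>G. finite G \<and> S = monoid_gen G)"

definition monoid_units :: "('n \<Rightarrow> int) set \<Rightarrow> ('n \<Rightarrow> int) set" where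
  "monoid_units S = {x \<in> S. \<exists>y \<in> S. (\<lambda>i. x i + y i) = (\<lambda>_. 0)}"

definition reduced_monoid :: "('n \<Rightarrow> int) set \<Rightarrow> bool" where
  "reduced_monoid S \<longleftrightarrow> (\<forall>x \<in> monoid_units S. x = (\<lambda>_. 0))"

definition atoms :: "('n \<Rightarrow> int) set \<Rightarrow> ('n \<Rightarrow> int) set" where
  "atoms S = {a \<in> S. a \<notin> monoid_units S \<and>
     (\<forall>b \<in> S. \<forall>c \<in> S. a = (\<lambda>i. b i + c i) \<longrightarrow> b \<in> monoid_units S \<or> c \<in> monoid_units S)}"

definition factorizations :: "('n \<Rightarrow> int) set \<Rightarrow> (('n \<Rightarrow> int) \<Rightarrow>\<^sub>0 nat) set" where
  "factorizations S = {\<alpha>. Poly_Mapping.keys \<alpha> \<subseteq> atoms S}"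

definition fact_eval :: "(('n \<Rightarrow> int) \<Rightarrow>\<^sub>0 nat) \<Rightarrow> ('n \<Rightarrow> int)" where
  "fact_eval \<alpha> = (\<lambda>i. \<Sum>a \<in> Poly_Mapping.keys \<alpha>. int (Poly_Mapping.lookup \<alpha> a) * a i)"

definition flen :: "('v \<Rightarrow>\<^sub>0 nat) \<Rightarrow> nat" where
  "flen \<alpha> = (\<Sum>a \<in> Poly_Mapping.keys \<alpha>. Poly_Mapping.lookup \<alpha> a)"

(* gcd(alpha,gamma)(a) = min(alpha a, gamma a); note min x y = x - (x - y) on nat
   and subtraction on ('v =>0 nat) is pointwise *)
definition fgcd :: "('v \<Rightarrow>\<^sub>0 nat) \<Rightarrow> ('v \<Rightarrow>\<^sub>0 nat) \<Rightarrow> ('v \<Rightarrow>\<^sub>0 nat)" where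
  "fgcd \<alpha> \<gamma> = \<alpha> - (\<alpha> - \<gamma>)"

definition fdist :: "('v \<Rightarrow>\<^sub>0 nat) \<Rightarrow> ('v \<Rightarrow>\<^sub>0 nat) \<Rightarrow> nat" where
  "fdist \<alpha> \<gamma> = max (flen (\<alpha> - fgcd \<alpha> \<gamma>)) (flen (\<gamma> - fgcd \<alpha> \<gamma>))"

definition catenary_ok :: "('n \<Rightarrow> int) set \<Rightarrow> nat \<Rightarrow> bool" where
  "catenary_ok S d \<longleftrightarrow>
     (\<forall>\<alpha> \<in> factorizations S. \<forall>\<gamma> \<in> factorizations S. fact_eval \<alpha> = fact_eval \<gamma> \<longrightarrow>
        (\<exists>xs. xs \<noteq> [] \<and> hd xs = \<alpha> \<and> last xs = \<gamma> \<and> set xs \<subseteq> factorizations S \<and>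
           (\<forall>j < length xs - 1. fact_eval (xs ! j) = fact_eval (xs ! (j + 1)) \<and>
                                fdist (xs ! j) (xs ! (j + 1)) \<le> d)))"

definition catenary_degree :: "('n \<Rightarrow> int) set \<Rightarrow> nat" where
  "catenary_degree S = (LEAST d. catenary_ok S d)"

(* R[x_a | a in A(S)]: polynomials whose monomials x^alpha only involve atoms *)
definition poly_ring :: "('n \<Rightarrow> int) set \<Rightarrow> ((('n \<Rightarrow> int) \<Rightarrow>\<^sub>0 nat) \<Rightarrow>\<^sub>0 'r::comm_ring_1) set" where
  "poly_ring S = {f. Poly_Mapping.keys f \<subseteq> factorizations S}"

(* pi_R: R-linear, x^alpha |-> a^alpha, into R[S] represented as finitely supported
   maps ('n => int) =>0 R (supported on S) *)
definition pi_R :: "((('n \<Rightarrow> int) \<Rightarrow>\<^sub>0 nat) \<Rightarrow>\<^sub>0 'r::comm_ring_1) \<Rightarrow> (('n \<Rightarrow> int) \<Rightarrow>\<^sub>0 'r)" where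
  "pi_R f = (\<Sum>\<alpha> \<in> Poly_Mapping.keys f. Poly_Mapping.single (fact_eval \<alpha>) (Poly_Mapping.lookup f \<alpha>))"

definition pi_kernel :: "('n \<Rightarrow> int) set \<Rightarrow> ((('n \<Rightarrow> int) \<Rightarrow>\<^sub>0 nat) \<Rightarrow>\<^sub>0 'r::comm_ring_1) set" where
  "pi_kernel S = {f \<in> poly_ring S. pi_R f = 0}"

definition binomials_le :: "('n \<Rightarrow> int) set \<Rightarrow> nat \<Rightarrow> ((('n \<Rightarrow> int) \<Rightarrow>\<^sub>0 nat) \<Rightarrow>\<^sub>0 'r::comm_ring_1) set" where
  "binomials_le S d = {Poly_Mapping.single \<alpha> 1 - Poly_Mapping.single \<gamma> 1 | \<alpha> \<gamma>.
      \<alpha> \<in> factorizations S \<and> \<gamma> \<in> factorizations S \<and> flen \<alpha> \<le> d \<and> flen \<gamma> \<le> d}"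

inductive_set ideal_gen :: "'a::comm_ring_1 set \<Rightarrow> 'a set \<Rightarrow> 'a set" for P B where
  zero: "0 \<in> ideal_gen P B"
| step: "g \<in> P \<Longrightarrow> b \<in> B \<Longrightarrow> h \<in> ideal_gen P B \<Longrightarrow> g * b + h \<in> ideal_gen P B"

definition kernel_binom_gen :: "'r::comm_ring_1 itself \<Rightarrow> ('n \<Rightarrow> int) set \<Rightarrow> nat \<Rightarrow> bool" where
  "kernel_binom_gen R S d \<longleftrightarrow>
     (\<exists>B :: ((('n \<Rightarrow> int) \<Rightarrow>\<^sub>0 nat) \<Rightarrow>\<^sub>0 'r) set.
        B \<subseteq> binomials_le S d \<and> (pi_kernel S :: ((('n \<Rightarrow> int) \<Rightarrow>\<^sub>0 nat) \<Rightarrow>\<^sub>0 'r) set) = ideal_gen (poly_ring S) B)"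

end

theory Submission
  imports Defs
begin
lemma pm_sum_repr: "g = (\<Sum>\<beta>\<in>Poly_Mapping.keys g. Poly_Mapping.single \<beta> (Poly_Mapping.lookup g \<beta>))"
  by (rule poly_mapping_eqI) (simp add: lookup_sum lookup_single when_def in_keys_iff)

lemma sum_keys_sup:
  assumes "finite K" "Poly_Mapping.keys h \<subseteq> K" "\<And>k. F k 0 = 0"
  shows "(\<Sum>k\<in>Poly_Mapping.keys h. F k (Poly_Mapping.lookup h k)) = (\<Sum>k\<in>K. F k (Poly_Mapping.lookup h k))"
  using assms by (intro sum.mono_neutral_left) (auto simp: in_keys_iff)

lemma fe_sup: "finite K \<Longrightarrow> Poly_Mapping.keys \<alpha> \<subseteq> K \<Longrightarrow>
   fact_eval \<alpha> = (\<lambda>i. \<Sum>a\<in>K. int (Poly_Mapping.lookup \<alpha> a) * a i)"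
  unfolding fact_eval_def by (rule ext, rule sum_keys_sup[where F="\<lambda>a c. int c * a _"]) auto

lemma fe_add: "fact_eval (\<alpha> + \<beta>) = (\<lambda>i. fact_eval \<alpha> i + fact_eval \<beta> i)"
proof (rule ext)
  fix i
  let ?K = "Poly_Mapping.keys \<alpha> \<union> Poly_Mapping.keys \<beta>"
  have k: "Poly_Mapping.keys (\<alpha> + \<beta>) \<subseteq> ?K" by (rule keys_add)
  have "fact_eval (\<alpha> + \<beta>) i = (\<Sum>a\<in>?K. int (Poly_Mapping.lookup (\<alpha>+\<beta>) a) * a i)"
    using fe_sup[OF _ k] by simp
  also have "\<dots> = (\<Sum>a\<in>?K. int (Poly_Mapping.lookup \<alpha> a) * a i + int (Poly_Mapping.lookup \<beta> a) * a i)"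
    by (rule sum.cong) (simp_all add: lookup_add distrib_right)
  also have "\<dots> = (\<Sum>a\<in>?K. int (Poly_Mapping.lookup \<alpha> a) * a i) + (\<Sum>a\<in>?K. int (Poly_Mapping.lookup \<beta> a) * a i)"
    by (rule sum.distrib)
  also have "\<dots> = fact_eval \<alpha> i + fact_eval \<beta> i"
    using fe_sup[of ?K \<alpha>] fe_sup[of ?K \<beta>] by simp
  finally show "fact_eval (\<alpha> + \<beta>) i = fact_eval \<alpha> i + fact_eval \<beta> i" .
qed

lemma fe_cancel: assumes "fact_eval (g + \<beta>) = fact_eval (g + \<delta>)" shows "fact_eval \<beta> = fact_eval \<delta>"
proof (rule ext)
  fix i
  have "fact_eval g i + fact_eval \<beta> i = fact_eval g i + fact_eval \<delta> i"
    using fun_cong[OF assms, of i] unfolding fe_add by simp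
  then show "fact_eval \<beta> i = fact_eval \<delta> i" by simp
qed

lemma fe_shift: "fact_eval \<beta> = fact_eval \<delta> \<Longrightarrow> fact_eval (g + \<beta>) = fact_eval (g + \<delta>)"
  unfolding fe_add by simp

lemma flen_sup: "finite K \<Longrightarrow> Poly_Mapping.keys \<alpha> \<subseteq> K \<Longrightarrow> flen \<alpha> = (\<Sum>a\<in>K. Poly_Mapping.lookup \<alpha> a)"
  unfolding flen_def by (rule sum_keys_sup[where F="\<lambda>a c. c"]) auto

lemma flen_add: "flen (\<alpha> + \<beta>) = flen \<alpha> + flen \<beta>"
proof -
  let ?K = "Poly_Mapping.keys \<alpha> \<union> Poly_Mapping.keys \<beta>"
  have "flen (\<alpha> + \<beta>) = (\<Sum>a\<in>?K. Poly_Mapping.lookup (\<alpha>+\<beta>) a)"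
    using keys_add[of \<alpha> \<beta>] by (intro flen_sup) auto
  moreover have "flen \<alpha> = (\<Sum>a\<in>?K. Poly_Mapping.lookup \<alpha> a)" by (intro flen_sup) auto
  moreover have "flen \<beta> = (\<Sum>a\<in>?K. Poly_Mapping.lookup \<beta> a)" by (intro flen_sup) auto
  ultimately show ?thesis by (simp add: lookup_add sum.distrib)
qed

lemma flen0: assumes "flen \<alpha> = 0" shows "\<alpha> = 0"
proof -
  have "\<forall>a\<in>Poly_Mapping.keys \<alpha>. Poly_Mapping.lookup \<alpha> a = 0"
    using assms unfolding flen_def by (simp add: sum_eq_0_iff)
  then have "Poly_Mapping.lookup \<alpha> a = 0" for a by (metis in_keys_iff)
  then show ?thesis by (intro poly_mapping_eqI) simp
qed

lemma flen_zero[simp]: "flen 0 = 0" unfolding flen_def by simp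

definition ple :: "('v \<Rightarrow>\<^sub>0 nat) \<Rightarrow> ('v \<Rightarrow>\<^sub>0 nat) \<Rightarrow> bool" where
  "ple \<alpha> \<beta> \<longleftrightarrow> (\<forall>a. Poly_Mapping.lookup \<alpha> a \<le> Poly_Mapping.lookup \<beta> a)"

lemma ple_decomp: "ple \<alpha> \<beta> \<Longrightarrow> \<beta> = \<alpha> + (\<beta> - \<alpha>)"
  unfolding ple_def by (intro poly_mapping_eqI) (simp add: lookup_add lookup_minus)

lemma keys_mono_add: "Poly_Mapping.keys (\<alpha>::'v \<Rightarrow>\<^sub>0 nat) \<subseteq> Poly_Mapping.keys (\<alpha> + \<beta>)"
  by (auto simp: in_keys_iff lookup_add)

lemma keys_minus_nat: "Poly_Mapping.keys ((\<alpha>::'v \<Rightarrow>\<^sub>0 nat) - \<beta>) \<subseteq> Poly_Mapping.keys \<alpha>"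
  by (auto simp: in_keys_iff lookup_minus)

lemma fact_add: "\<alpha> \<in> factorizations S \<Longrightarrow> \<beta> \<in> factorizations S \<Longrightarrow> \<alpha> + \<beta> \<in> factorizations S"
  unfolding factorizations_def using keys_add[of \<alpha> \<beta>] by blast

lemma fact_minus: "\<alpha> \<in> factorizations S \<Longrightarrow> \<alpha> - \<beta> \<in> factorizations S"
  unfolding factorizations_def using keys_minus_nat[of \<alpha> \<beta>] by blast

lemma fact_addD: "\<alpha> + \<beta> \<in> factorizations S \<Longrightarrow> \<alpha> \<in> factorizations S"
  unfolding factorizations_def using keys_mono_add[of \<alpha> \<beta>] by blast

lemma fact_zero[simp]: "0 \<in> factorizations S" unfolding factorizations_def by simp

lemma ple_flen: assumes "ple \<alpha> \<beta>" shows "flen \<alpha> \<le> flen \<beta>"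
proof -
  obtain e where e: "\<beta> = \<alpha> + e" using ple_decomp[OF assms] by blast
  show ?thesis unfolding e flen_add by simp
qed

lemma ple_flen_eq: assumes "ple \<alpha> \<beta>" "flen \<alpha> = flen \<beta>" shows "\<alpha> = \<beta>"
proof -
  obtain e where e: "\<beta> = \<alpha> + e" using ple_decomp[OF assms(1)] by blast
  then have "flen e = 0" using assms(2) by (simp add: flen_add)
  then have "e = 0" by (rule flen0)
  then show ?thesis using e by simp
qed

lemma fgcd_lookup: "Poly_Mapping.lookup (fgcd \<alpha> \<gamma>) a = min (Poly_Mapping.lookup \<alpha> a) (Poly_Mapping.lookup \<gamma> a)"
  unfolding fgcd_def by (simp add: lookup_minus)

lemma fgcd_shift: "fgcd (\<beta> + \<alpha>) (\<beta> + \<gamma>) = \<beta> + fgcd \<alpha> \<gamma>"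
  by (intro poly_mapping_eqI) (simp add: fgcd_lookup lookup_add)

lemma minus_shift: "((\<beta>::'v \<Rightarrow>\<^sub>0 nat) + \<alpha>) - (\<beta> + g) = \<alpha> - g"
  by (intro poly_mapping_eqI) (simp add: lookup_add lookup_minus)

lemma fdist_shift: "fdist (\<beta> + \<alpha>) (\<beta> + \<gamma>) = fdist \<alpha> \<gamma>"
  unfolding fdist_def fgcd_shift minus_shift by simp

lemma fgcd_sym: "fgcd \<alpha> \<gamma> = fgcd \<gamma> \<alpha>"
  by (intro poly_mapping_eqI) (simp add: fgcd_lookup)

lemma fdist_sym: "fdist \<alpha> \<gamma> = fdist \<gamma> \<alpha>"
  unfolding fdist_def by (simp add: fgcd_sym max.commute)

lemma ple_minus: "ple ((\<alpha>::'v \<Rightarrow>\<^sub>0 nat) - \<beta>) \<alpha>"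
  unfolding ple_def by (simp add: lookup_minus)

lemma fdist_le: "fdist \<alpha> \<gamma> \<le> max (flen \<alpha>) (flen \<gamma>)"
proof -
  have "flen (\<alpha> - fgcd \<alpha> \<gamma>) \<le> flen \<alpha>" by (rule ple_flen[OF ple_minus])
  moreover have "flen (\<gamma> - fgcd \<alpha> \<gamma>) \<le> flen \<gamma>" by (rule ple_flen[OF ple_minus])
  ultimately show ?thesis unfolding fdist_def by linarith
qed

lemma ple_fgcd1: "ple (fgcd \<alpha> \<gamma>) \<alpha>" unfolding ple_def fgcd_lookup by simp
lemma ple_fgcd2: "ple (fgcd \<alpha> \<gamma>) \<gamma>" unfolding ple_def fgcd_lookup by simp

inductive reach :: "('n \<Rightarrow> int) set \<Rightarrow> nat \<Rightarrow> (('n \<Rightarrow> int) \<Rightarrow>\<^sub>0 nat) \<Rightarrow> (('n \<Rightarrow> int) \<Rightarrow>\<^sub>0 nat) \<Rightarrow> bool"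
  for S d where
  refl: "\<alpha> \<in> factorizations S \<Longrightarrow> reach S d \<alpha> \<alpha>"
| step: "reach S d \<alpha> \<beta> \<Longrightarrow> \<gamma> \<in> factorizations S \<Longrightarrow> fact_eval \<beta> = fact_eval \<gamma> \<Longrightarrow>
         fdist \<beta> \<gamma> \<le> d \<Longrightarrow> reach S d \<alpha> \<gamma>"

lemma reach_props: "reach S d \<alpha> \<beta> \<Longrightarrow> \<alpha> \<in> factorizations S \<and> \<beta> \<in> factorizations S \<and> fact_eval \<alpha> = fact_eval \<beta>"
  by (induction rule: reach.induct) auto

lemma reach_trans: "reach S d \<beta> \<gamma> \<Longrightarrow> reach S d \<alpha> \<beta> \<Longrightarrow> reach S d \<alpha> \<gamma>"
proof (induction rule: reach.induct)
  case (refl \<alpha>')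
  then show ?case by simp
next
  case (step \<alpha>' \<beta>' \<gamma>')
  show ?case by (rule reach.step[OF step.IH[OF step.prems] step.hyps(2-4)])
qed

lemma reach_one: "\<alpha> \<in> factorizations S \<Longrightarrow> \<gamma> \<in> factorizations S \<Longrightarrow> fact_eval \<alpha> = fact_eval \<gamma> \<Longrightarrow>
    fdist \<alpha> \<gamma> \<le> d \<Longrightarrow> reach S d \<alpha> \<gamma>"
  by (rule reach.step[OF reach.refl])

lemma reach_sym: "reach S d \<alpha> \<gamma> \<Longrightarrow> reach S d \<gamma> \<alpha>"
proof (induction rule: reach.induct)
  case (refl \<alpha>) then show ?case by (rule reach.refl)
next
  case (step \<alpha> \<beta> \<gamma>)
  have p: "\<beta> \<in> factorizations S" using reach_props[OF step(1)] by blast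
  have "fdist \<gamma> \<beta> \<le> d" using step(4) fdist_sym[of \<gamma> \<beta>] by simp
  then have "reach S d \<gamma> \<beta>" using step(2,3) p by (intro reach_one) simp_all
  then show ?case by (rule reach_trans[OF step(5)])
qed

lemma reach_shift: "reach S d \<alpha> \<gamma> \<Longrightarrow> \<beta> \<in> factorizations S \<Longrightarrow> reach S d (\<beta> + \<alpha>) (\<beta> + \<gamma>)"
proof (induction rule: reach.induct)
  case (refl \<alpha>) then show ?case by (intro reach.refl fact_add)
next
  case (step \<alpha> \<beta>' \<gamma>)
  have r: "reach S d (\<beta> + \<alpha>) (\<beta> + \<beta>')" by (rule step.IH[OF step.prems])
  have f: "\<beta> + \<gamma> \<in> factorizations S" by (rule fact_add[OF step.prems step.hyps(2)])
  have e: "fact_eval (\<beta> + \<beta>') = fact_eval (\<beta> + \<gamma>)" by (rule fe_shift[OF step.hyps(3)])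
  have g: "fdist (\<beta> + \<beta>') (\<beta> + \<gamma>) \<le> d" unfolding fdist_shift by (rule step.hyps(4))
  show ?case by (rule reach.step[OF r f e g])
qed

definition creach :: "('n \<Rightarrow> int) set \<Rightarrow> nat \<Rightarrow> bool" where
  "creach S d \<longleftrightarrow> (\<forall>\<alpha> \<in> factorizations S. \<forall>\<gamma> \<in> factorizations S. fact_eval \<alpha> = fact_eval \<gamma> \<longrightarrow> reach S d \<alpha> \<gamma>)"

definition chain_ok where
  "chain_ok S d \<alpha> \<gamma> xs \<longleftrightarrow> xs \<noteq> [] \<and> hd xs = \<alpha> \<and> last xs = \<gamma> \<and> set xs \<subseteq> factorizations S \<and>
           (\<forall>j < length xs - 1. fact_eval (xs ! j) = fact_eval (xs ! (j + 1)) \<and>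
                                fdist (xs ! j) (xs ! (j + 1)) \<le> d)"

lemma reach_chain: "reach S d \<alpha> \<gamma> \<Longrightarrow> \<exists>xs. chain_ok S d \<alpha> \<gamma> xs"
proof (induction rule: reach.induct)
  case (refl \<alpha>)
  then have "chain_ok S d \<alpha> \<alpha> [\<alpha>]" by (simp add: chain_ok_def)
  then show ?case by blast
next
  case (step \<alpha> \<beta> \<gamma>)
  then obtain xs where xs: "chain_ok S d \<alpha> \<beta> xs" by blast
  have x1: "xs \<noteq> []" and x2: "hd xs = \<alpha>" and x3: "last xs = \<beta>" and x4: "set xs \<subseteq> factorizations S"
    and x5: "\<And>j. j < length xs - 1 \<Longrightarrow> fact_eval (xs ! j) = fact_eval (xs ! (j + 1)) \<and>
                                fdist (xs ! j) (xs ! (j + 1)) \<le> d"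
    using xs unfolding chain_ok_def by blast+
  let ?ys = "xs @ [\<gamma>]"
  have y5: "fact_eval (?ys ! j) = fact_eval (?ys ! (j + 1)) \<and> fdist (?ys ! j) (?ys ! (j + 1)) \<le> d"
    if j: "j < length ?ys - 1" for j
  proof (cases "j < length xs - 1")
    case True
    then have "j < length xs" "j + 1 < length xs" by linarith+
    then have "?ys ! j = xs ! j" "?ys ! (j+1) = xs ! (j+1)" by (simp_all add: nth_append)
    then show ?thesis using x5[OF True] by simp
  next
    case False
    with j have jj: "j = length xs - 1" by simp
    have lx: "length xs > 0" using x1 by simp
    have "xs ! (length xs - 1) = \<beta>" using x1 x3 by (simp add: last_conv_nth)
    then have "?ys ! j = \<beta>" using jj lx by (simp add: nth_append)
    moreover have "?ys ! (j + 1) = \<gamma>" using jj lx by (simp add: nth_append)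
    ultimately show ?thesis using step.hyps(3,4) by simp
  qed
  have "chain_ok S d \<alpha> \<gamma> ?ys"
    unfolding chain_ok_def using x1 x2 x4 y5 step.hyps(2) by simp
  then show ?case by blast
qed

lemma chain_reach: assumes "chain_ok S d \<alpha> \<gamma> xs" shows "reach S d \<alpha> \<gamma>"
proof -
  have xs: "xs \<noteq> []" "hd xs = \<alpha>" "last xs = \<gamma>" "set xs \<subseteq> factorizations S"
    "\<And>j. j < length xs - 1 \<Longrightarrow> fact_eval (xs ! j) = fact_eval (xs ! (j + 1)) \<and> fdist (xs ! j) (xs ! (j + 1)) \<le> d"
    using assms unfolding chain_ok_def by auto
  have "j < length xs \<Longrightarrow> reach S d \<alpha> (xs ! j)" for j
  proof (induction j)
    case 0 then show ?case using xs by (metis hd_conv_nth nth_mem reach.refl subsetD)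
  next
    case (Suc j)
    have "j < length xs" using Suc.prems by simp
    then have r: "reach S d \<alpha> (xs ! j)" by (rule Suc.IH)
    have "j < length xs - 1" using Suc.prems by simp
    then have e: "fact_eval (xs ! j) = fact_eval (xs ! (j + 1)) \<and> fdist (xs ! j) (xs ! (j + 1)) \<le> d"
      by (rule xs(5))
    have "xs ! Suc j \<in> factorizations S" using Suc.prems xs(4) nth_mem by blast
    then show ?case using e by (intro reach.step[OF r]) auto
  qed
  then show ?thesis using xs by (metis last_conv_nth diff_less length_greater_0_conv zero_less_one)
qed

lemma catenary_creach: "catenary_ok S d \<longleftrightarrow> creach S d"
proof
  assume h: "catenary_ok S d"
  show "creach S d" unfolding creach_def
  proof (intro ballI impI)
    fix \<alpha> \<gamma> assume "\<alpha> \<in> factorizations S" "\<gamma> \<in> factorizations S" "fact_eval \<alpha> = fact_eval \<gamma>"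
    then obtain xs where "chain_ok S d \<alpha> \<gamma> xs" using h unfolding catenary_ok_def chain_ok_def by blast
    then show "reach S d \<alpha> \<gamma>" by (rule chain_reach)
  qed
next
  assume h: "creach S d"
  show "catenary_ok S d" unfolding catenary_ok_def
  proof (intro ballI impI)
    fix \<alpha> \<gamma> assume "\<alpha> \<in> factorizations S" "\<gamma> \<in> factorizations S" "fact_eval \<alpha> = fact_eval \<gamma>"
    then have "reach S d \<alpha> \<gamma>" using h unfolding creach_def by blast
    then obtain xs where "chain_ok S d \<alpha> \<gamma> xs" using reach_chain by blast
    then show "\<exists>xs. xs \<noteq> [] \<and> hd xs = \<alpha> \<and> last xs = \<gamma> \<and> set xs \<subseteq> factorizations S \<and>
           (\<forall>j < length xs - 1. fact_eval (xs ! j) = fact_eval (xs ! (j + 1)) \<and>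
                                fdist (xs ! j) (xs ! (j + 1)) \<le> d)" unfolding chain_ok_def by blast
  qed
qed

lemma pi_R_sup: "finite K \<Longrightarrow> Poly_Mapping.keys f \<subseteq> K \<Longrightarrow>
  pi_R f = (\<Sum>\<alpha>\<in>K. Poly_Mapping.single (fact_eval \<alpha>) (Poly_Mapping.lookup f \<alpha>))"
  unfolding pi_R_def by (rule sum_keys_sup) simp_all

lemma pi_R_add: "pi_R (f + g) = pi_R f + pi_R g"
proof -
  let ?K = "Poly_Mapping.keys f \<union> Poly_Mapping.keys g"
  have k: "Poly_Mapping.keys (f + g) \<subseteq> ?K" by (rule keys_add)
  have "pi_R (f + g) = (\<Sum>\<alpha>\<in>?K. Poly_Mapping.single (fact_eval \<alpha>) (Poly_Mapping.lookup (f + g) \<alpha>))"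
    by (rule pi_R_sup[OF _ k]) simp
  also have "\<dots> = (\<Sum>\<alpha>\<in>?K. Poly_Mapping.single (fact_eval \<alpha>) (Poly_Mapping.lookup f \<alpha>) +
                   Poly_Mapping.single (fact_eval \<alpha>) (Poly_Mapping.lookup g \<alpha>))"
    by (rule sum.cong) (simp_all add: lookup_add single_add)
  also have "\<dots> = (\<Sum>\<alpha>\<in>?K. Poly_Mapping.single (fact_eval \<alpha>) (Poly_Mapping.lookup f \<alpha>)) +
                   (\<Sum>\<alpha>\<in>?K. Poly_Mapping.single (fact_eval \<alpha>) (Poly_Mapping.lookup g \<alpha>))"
    by (rule sum.distrib)
  also have "\<dots> = pi_R f + pi_R g"
    using pi_R_sup[of ?K f] pi_R_sup[of ?K g] by simp
  finally show ?thesis .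
qed

lemma pi_R_zero[simp]: "pi_R 0 = 0" unfolding pi_R_def by simp

lemma pi_R_diff: "pi_R (f - g) = pi_R f - pi_R g"
proof -
  have "pi_R f = pi_R ((f - g) + g)" by simp
  also have "\<dots> = pi_R (f - g) + pi_R g" by (rule pi_R_add)
  finally show ?thesis by (simp add: algebra_simps)
qed

lemma pi_R_single: "pi_R (Poly_Mapping.single \<alpha> c) = Poly_Mapping.single (fact_eval \<alpha>) c"
  using pi_R_sup[of "{\<alpha>}" "Poly_Mapping.single \<alpha> c"] by simp

lemma lookup_pi: "Poly_Mapping.lookup (pi_R f) s =
    (\<Sum>\<alpha>\<in>{\<alpha>\<in>Poly_Mapping.keys f. fact_eval \<alpha> = s}. Poly_Mapping.lookup f \<alpha>)"
  unfolding pi_R_def lookup_sum lookup_single when_def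
  by (simp add: sum.inter_filter)

lemma add_hom_binom:
  fixes L :: "(('v \<Rightarrow>\<^sub>0 nat) \<Rightarrow>\<^sub>0 'r::comm_ring_1) \<Rightarrow> 'b::ab_group_add"
  assumes add: "\<And>f h. L (f + h) = L f + L h"
    and sing: "\<And>\<beta> c. L (Poly_Mapping.single (\<beta> + \<alpha>) c) = L (Poly_Mapping.single (\<beta> + \<gamma>) c)"
  shows "L (g * (Poly_Mapping.single \<alpha> 1 - Poly_Mapping.single \<gamma> 1)) = 0"
proof -
  have L0: "L 0 = 0" using add[of 0 0] by simp
  have Ld: "L (f - h) = L f - L h" for f h
    using add[of "f - h" h] by (simp add: algebra_simps)
  have Ls: "L (sum F A) = (\<Sum>x\<in>A. L (F x))" for F :: "_ \<Rightarrow> _" and A :: "_ set"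
  proof (induction A rule: infinite_finite_induct)
    case (infinite A) then show ?case by (simp add: L0)
  next
    case empty then show ?case by (simp add: L0)
  next
    case (insert x F) then show ?case by (simp add: add)
  qed
  let ?b = "Poly_Mapping.single \<alpha> (1::'r) - Poly_Mapping.single \<gamma> 1"
  have e: "(\<Sum>\<beta>\<in>Poly_Mapping.keys g. Poly_Mapping.single \<beta> (Poly_Mapping.lookup g \<beta>)) = g"
    by (rule pm_sum_repr[symmetric])
  have "g * ?b = (\<Sum>\<beta>\<in>Poly_Mapping.keys g. Poly_Mapping.single \<beta> (Poly_Mapping.lookup g \<beta>)) * ?b"
    by (simp only: e)
  also have "\<dots> = (\<Sum>\<beta>\<in>Poly_Mapping.keys g. Poly_Mapping.single \<beta> (Poly_Mapping.lookup g \<beta>) * ?b)"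
    by (rule sum_distrib_right)
  also have "\<dots> = (\<Sum>\<beta>\<in>Poly_Mapping.keys g. Poly_Mapping.single (\<beta> + \<alpha>) (Poly_Mapping.lookup g \<beta>)
                    - Poly_Mapping.single (\<beta> + \<gamma>) (Poly_Mapping.lookup g \<beta>))"
    by (rule sum.cong) (simp_all add: right_diff_distrib mult_single)
  finally have "L (g * ?b) = (\<Sum>\<beta>\<in>Poly_Mapping.keys g. L (Poly_Mapping.single (\<beta> + \<alpha>) (Poly_Mapping.lookup g \<beta>))
                    - L (Poly_Mapping.single (\<beta> + \<gamma>) (Poly_Mapping.lookup g \<beta>)))"
    by (simp add: Ls Ld)
  also have "\<dots> = 0" by (simp add: sing)
  finally show ?thesis .
qed

lemma poly_ring_add: "f \<in> poly_ring S \<Longrightarrow> g \<in> poly_ring S \<Longrightarrow> f + g \<in> poly_ring S"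
  unfolding poly_ring_def using keys_add[of f g] by blast

lemma poly_ring_diff: "f \<in> poly_ring S \<Longrightarrow> g \<in> poly_ring S \<Longrightarrow> f - g \<in> poly_ring S"
  unfolding poly_ring_def using keys_diff[of f g] by blast

lemma poly_ring_single: "\<alpha> \<in> factorizations S \<Longrightarrow> Poly_Mapping.single \<alpha> c \<in> poly_ring S"
  unfolding poly_ring_def by simp

lemma poly_ring_zero[simp]: "0 \<in> poly_ring S" unfolding poly_ring_def by simp

lemma poly_ring_mult: "f \<in> poly_ring S \<Longrightarrow> g \<in> poly_ring S \<Longrightarrow> f * g \<in> poly_ring S"
proof -
  assume f: "f \<in> poly_ring S" and g: "g \<in> poly_ring S"
  have "Poly_Mapping.keys (f * g) \<subseteq> {a + b |a b. a \<in> Poly_Mapping.keys f \<and> b \<in> Poly_Mapping.keys g}"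
    by (rule keys_mult)
  also have "\<dots> \<subseteq> factorizations S"
    using f g unfolding poly_ring_def by (auto intro: fact_add)
  finally show ?thesis unfolding poly_ring_def by simp
qed

lemma I_add: "x \<in> ideal_gen P B \<Longrightarrow> y \<in> ideal_gen P B \<Longrightarrow> x + y \<in> ideal_gen P B"
proof (induction rule: ideal_gen.induct)
  case zero then show ?case by simp
next
  case (step g b h)
  have "g * b + (h + y) \<in> ideal_gen P B" by (rule ideal_gen.step[OF step.hyps(1,2) step.IH[OF step.prems]])
  then show ?case by (simp add: add.assoc)
qed

lemma I_mult: "x \<in> ideal_gen (poly_ring S) B \<Longrightarrow> r \<in> poly_ring S \<Longrightarrow> r * x \<in> ideal_gen (poly_ring S) B"
proof (induction rule: ideal_gen.induct)
  case zero then show ?case by (simp add: ideal_gen.zero)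
next
  case (step g b h)
  have "(r * g) * b + r * h \<in> ideal_gen (poly_ring S) B"
    by (rule ideal_gen.step[OF poly_ring_mult[OF step.prems step.hyps(1)] step.hyps(2) step.IH[OF step.prems]])
  then show ?case by (simp add: algebra_simps)
qed

lemma I_gen: "b \<in> B \<Longrightarrow> b \<in> ideal_gen (poly_ring S) B"
proof -
  assume b: "b \<in> B"
  have "1 \<in> poly_ring S" unfolding poly_ring_def by simp
  from ideal_gen.step[OF this b ideal_gen.zero] show ?thesis by simp
qed

lemma I_diff: "x \<in> ideal_gen (poly_ring S) B \<Longrightarrow> y \<in> ideal_gen (poly_ring S) B \<Longrightarrow> x - y \<in> ideal_gen (poly_ring S) B"
proof -
  assume x: "x \<in> ideal_gen (poly_ring S) B" and y: "y \<in> ideal_gen (poly_ring S) B"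
  have "-1 \<in> poly_ring S" unfolding poly_ring_def by simp
  from I_mult[OF y this] have "- y \<in> ideal_gen (poly_ring S) B" by simp
  from I_add[OF x this] show ?thesis by simp
qed

definition binB :: "('n \<Rightarrow> int) set \<Rightarrow> nat \<Rightarrow> ((('n \<Rightarrow> int) \<Rightarrow>\<^sub>0 nat) \<Rightarrow>\<^sub>0 'r::comm_ring_1) set" where
  "binB S d = {Poly_Mapping.single \<alpha> 1 - Poly_Mapping.single \<gamma> 1 | \<alpha> \<gamma>.
      \<alpha> \<in> factorizations S \<and> \<gamma> \<in> factorizations S \<and> flen \<alpha> \<le> d \<and> flen \<gamma> \<le> d \<and> fact_eval \<alpha> = fact_eval \<gamma>}"

lemma binB_sub: "binB S d \<subseteq> binomials_le S d"
  unfolding binB_def binomials_le_def by blast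

lemma I_kernel:
  assumes "x \<in> ideal_gen (poly_ring S) (binB S d :: ((('n \<Rightarrow> int) \<Rightarrow>\<^sub>0 nat) \<Rightarrow>\<^sub>0 'r::comm_ring_1) set)"
  shows "x \<in> pi_kernel S"
  using assms
proof (induction rule: ideal_gen.induct)
  case zero then show ?case unfolding pi_kernel_def by simp
next
  case (step g b h)
  from step.hyps(2) obtain \<alpha> \<gamma> where b: "b = Poly_Mapping.single \<alpha> 1 - Poly_Mapping.single \<gamma> 1"
    and f: "\<alpha> \<in> factorizations S" "\<gamma> \<in> factorizations S" and e: "fact_eval \<alpha> = fact_eval \<gamma>"
    unfolding binB_def by blast
  have bP: "b \<in> poly_ring S" unfolding b using f by (intro poly_ring_diff poly_ring_single)
  have "pi_R (g * b) = 0" unfolding b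
  proof (rule add_hom_binom)
    show "pi_R (f + h) = pi_R f + pi_R h" for f h :: "(('n \<Rightarrow> int) \<Rightarrow>\<^sub>0 nat) \<Rightarrow>\<^sub>0 'r" by (rule pi_R_add)
    show "pi_R (Poly_Mapping.single (\<beta> + \<alpha>) c) = pi_R (Poly_Mapping.single (\<beta> + \<gamma>) c)" for \<beta> and c :: 'r
      unfolding pi_R_single using fe_shift[OF e] by simp
  qed
  moreover have "g * b + h \<in> poly_ring S"
    using step.IH step.hyps(1) bP unfolding pi_kernel_def by (auto intro: poly_ring_add poly_ring_mult)
  ultimately show ?case using step.IH unfolding pi_kernel_def by (simp add: pi_R_add)
qed

lemma reach_I:
  assumes "reach S d \<alpha> \<gamma>"
  shows "Poly_Mapping.single \<alpha> (1::'r::comm_ring_1) - Poly_Mapping.single \<gamma> 1 \<in> ideal_gen (poly_ring S) (binB S d)"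
  using assms
proof (induction rule: reach.induct)
  case (refl \<alpha>) then show ?case by (simp add: ideal_gen.zero)
next
  case (step \<alpha> \<beta> \<gamma>)
  define g where "g = fgcd \<beta> \<gamma>"
  define \<beta>' where "\<beta>' = \<beta> - g"
  define \<gamma>' where "\<gamma>' = \<gamma> - g"
  have fb: "\<beta> \<in> factorizations S" using reach_props[OF step.hyps(1)] by blast
  have b: "\<beta> = g + \<beta>'" unfolding \<beta>'_def g_def by (rule ple_decomp[OF ple_fgcd1])
  have c: "\<gamma> = g + \<gamma>'" unfolding \<gamma>'_def g_def by (rule ple_decomp[OF ple_fgcd2])
  have fg: "g \<in> factorizations S" unfolding g_def fgcd_def by (rule fact_minus[OF fb])
  have fb': "\<beta>' \<in> factorizations S" unfolding \<beta>'_def by (rule fact_minus[OF fb])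
  have fc': "\<gamma>' \<in> factorizations S" unfolding \<gamma>'_def by (rule fact_minus[OF step.hyps(2)])
  have len: "flen \<beta>' \<le> d" "flen \<gamma>' \<le> d"
    using step.hyps(4) unfolding fdist_def \<beta>'_def \<gamma>'_def g_def by simp_all
  have ev: "fact_eval \<beta>' = fact_eval \<gamma>'"
    using step.hyps(3) b c fe_cancel by metis
  have inB: "Poly_Mapping.single \<beta>' (1::'r) - Poly_Mapping.single \<gamma>' 1 \<in> binB S d"
    unfolding binB_def using fb' fc' len ev by blast
  have gP: "Poly_Mapping.single g (1::'r) \<in> poly_ring S" by (rule poly_ring_single[OF fg])
  have "Poly_Mapping.single g (1::'r) * (Poly_Mapping.single \<beta>' 1 - Poly_Mapping.single \<gamma>' 1) + 0
        \<in> ideal_gen (poly_ring S) (binB S d)"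
    by (rule ideal_gen.step[OF gP inB ideal_gen.zero])
  moreover have "Poly_Mapping.single g (1::'r) * (Poly_Mapping.single \<beta>' 1 - Poly_Mapping.single \<gamma>' 1) + 0
      = Poly_Mapping.single \<beta> 1 - Poly_Mapping.single \<gamma> 1"
    by (simp add: right_diff_distrib mult_single flip: b c)
  ultimately have "Poly_Mapping.single \<beta> (1::'r) - Poly_Mapping.single \<gamma> 1 \<in> ideal_gen (poly_ring S) (binB S d)"
    by simp
  from I_add[OF step.IH this] show ?case by simp
qed

lemma kernel_I:
  assumes cr: "creach S d"
  shows "f \<in> pi_kernel S \<Longrightarrow> f \<in> ideal_gen (poly_ring S) (binB S d :: ((('n \<Rightarrow> int) \<Rightarrow>\<^sub>0 nat) \<Rightarrow>\<^sub>0 'r::comm_ring_1) set)"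
proof (induction "card (Poly_Mapping.keys f)" arbitrary: f rule: less_induct)
  case less
  show ?case
  proof (cases "f = 0")
    case True then show ?thesis by (simp add: ideal_gen.zero)
  next
    case False
    then obtain \<alpha> where ak: "\<alpha> \<in> Poly_Mapping.keys f" by (metis keys_eq_empty all_not_in_conv)
    define c where "c = Poly_Mapping.lookup f \<alpha>"
    have c0: "c \<noteq> 0" using ak unfolding c_def by (simp add: in_keys_iff)
    have fP: "f \<in> poly_ring S" and pf: "pi_R f = 0" using less.prems unfolding pi_kernel_def by auto
    have keysF: "Poly_Mapping.keys f \<subseteq> factorizations S" using fP unfolding poly_ring_def by simp
    obtain \<beta> where bk: "\<beta> \<in> Poly_Mapping.keys f" and ba: "\<beta> \<noteq> \<alpha>" and be: "fact_eval \<beta> = fact_eval \<alpha>"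
    proof (rule ccontr)
      assume "\<not> thesis"
      with that have "{\<beta>\<in>Poly_Mapping.keys f. fact_eval \<beta> = fact_eval \<alpha>} = {\<alpha>}" using ak by blast
      then have "Poly_Mapping.lookup (pi_R f) (fact_eval \<alpha>) = c" unfolding lookup_pi c_def by simp
      with pf c0 show False by simp
    qed
    have fa: "\<alpha> \<in> factorizations S" using ak keysF by blast
    have fb: "\<beta> \<in> factorizations S" using bk keysF by blast
    have r: "reach S d \<alpha> \<beta>" using cr fa fb be unfolding creach_def by simp
    define t where "t = Poly_Mapping.single \<alpha> c - Poly_Mapping.single \<beta> c"
    have "t = Poly_Mapping.single 0 c * (Poly_Mapping.single \<alpha> 1 - Poly_Mapping.single \<beta> 1)"
      unfolding t_def by (simp add: right_diff_distrib mult_single)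
    moreover have "Poly_Mapping.single 0 c \<in> poly_ring S" by (rule poly_ring_single) simp
    ultimately have tI: "t \<in> ideal_gen (poly_ring S) (binB S d)"
      using I_mult[OF reach_I[OF r]] by simp
    define f' where "f' = f - t"
    have lk: "Poly_Mapping.lookup f' x = Poly_Mapping.lookup f x - (if x = \<alpha> then c else 0) + (if x = \<beta> then c else 0)" for x
      unfolding f'_def t_def by (simp add: lookup_minus lookup_single when_def)
    have kf': "Poly_Mapping.keys f' \<subseteq> Poly_Mapping.keys f - {\<alpha>}"
    proof
      fix x assume x: "x \<in> Poly_Mapping.keys f'"
      then have "Poly_Mapping.lookup f' x \<noteq> 0" by (simp add: in_keys_iff)
      then show "x \<in> Poly_Mapping.keys f - {\<alpha>}" using lk[of x] ba bk unfolding c_def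
        by (auto simp: in_keys_iff split: if_splits)
    qed
    have "card (Poly_Mapping.keys f') < card (Poly_Mapping.keys f)"
    proof (rule psubset_card_mono[OF finite_keys])
      show "Poly_Mapping.keys f' \<subset> Poly_Mapping.keys f" using ak kf' by blast
    qed
    moreover have "f' \<in> pi_kernel S"
    proof -
      have "f' \<in> poly_ring S" using kf' keysF unfolding poly_ring_def by blast
      moreover have "pi_R f' = 0" unfolding f'_def t_def
        by (simp add: pi_R_diff pi_R_single pf be)
      ultimately show ?thesis unfolding pi_kernel_def by simp
    qed
    ultimately have "f' \<in> ideal_gen (poly_ring S) (binB S d)" by (rule less.hyps)
    from I_add[OF this tI] show ?thesis unfolding f'_def by simp
  qed
qed

lemma creach_gen:
  fixes S :: "('n \<Rightarrow> int) set"
  assumes "creach S d"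
  shows "kernel_binom_gen TYPE('r::comm_ring_1) S d"
  unfolding kernel_binom_gen_def
proof (intro exI[of _ "binB S d :: ((('n \<Rightarrow> int) \<Rightarrow>\<^sub>0 nat) \<Rightarrow>\<^sub>0 'r) set"] conjI)
  show "binB S d \<subseteq> binomials_le S d" by (rule binB_sub)
  show "(pi_kernel S :: ((('n \<Rightarrow> int) \<Rightarrow>\<^sub>0 nat) \<Rightarrow>\<^sub>0 'r) set) = ideal_gen (poly_ring S) (binB S d)"
  proof (intro equalityI subsetI)
    fix x assume "x \<in> (pi_kernel S :: ((('n \<Rightarrow> int) \<Rightarrow>\<^sub>0 nat) \<Rightarrow>\<^sub>0 'r) set)"
    then show "x \<in> ideal_gen (poly_ring S) (binB S d)" by (rule kernel_I[OF assms])
  next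
    fix x assume "x \<in> ideal_gen (poly_ring S) (binB S d :: ((('n \<Rightarrow> int) \<Rightarrow>\<^sub>0 nat) \<Rightarrow>\<^sub>0 'r) set)"
    then show "x \<in> pi_kernel S" by (rule I_kernel)
  qed
qed

lemma single_inj1:
  assumes "Poly_Mapping.single a (1::'r::comm_ring_1) = Poly_Mapping.single b 1" shows "a = b"
proof (rule ccontr)
  assume "a \<noteq> b"
  have "Poly_Mapping.lookup (Poly_Mapping.single a (1::'r)) a = Poly_Mapping.lookup (Poly_Mapping.single b 1) a"
    using assms by simp
  with \<open>a \<noteq> b\<close> show False by (simp add: lookup_single_not_eq)
qed

lemma gen_creach:
  fixes S :: "('n \<Rightarrow> int) set"
  assumes "kernel_binom_gen TYPE('r::comm_ring_1) S d"
  shows "creach S d"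
  unfolding creach_def
proof (intro ballI impI)
  fix \<alpha> \<gamma> assume fa: "\<alpha> \<in> factorizations S" and fc: "\<gamma> \<in> factorizations S"
    and ev: "fact_eval \<alpha> = fact_eval \<gamma>"
  obtain B :: "((('n \<Rightarrow> int) \<Rightarrow>\<^sub>0 nat) \<Rightarrow>\<^sub>0 'r) set" where
    B: "B \<subseteq> binomials_le S d" and K: "pi_kernel S = ideal_gen (poly_ring S) B"
    using assms unfolding kernel_binom_gen_def by blast
  define Comp where "Comp = {\<delta>. reach S d \<alpha> \<delta>}"
  define \<phi> where "\<phi> h = (\<Sum>\<delta>\<in>Poly_Mapping.keys h. if \<delta> \<in> Comp then Poly_Mapping.lookup h \<delta> else 0)"
    for h :: "(('n \<Rightarrow> int) \<Rightarrow>\<^sub>0 nat) \<Rightarrow>\<^sub>0 'r"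
  have \<phi>_sup: "\<phi> h = (\<Sum>\<delta>\<in>K. if \<delta> \<in> Comp then Poly_Mapping.lookup h \<delta> else 0)"
    if "finite K" "Poly_Mapping.keys h \<subseteq> K" for K h
    unfolding \<phi>_def by (rule sum_keys_sup[OF that]) simp
  have \<phi>_add: "\<phi> (f + h) = \<phi> f + \<phi> h" for f h
  proof -
    let ?K = "Poly_Mapping.keys f \<union> Poly_Mapping.keys h"
    have k: "Poly_Mapping.keys (f + h) \<subseteq> ?K" by (rule keys_add)
    have "\<phi> (f + h) = (\<Sum>\<delta>\<in>?K. if \<delta> \<in> Comp then Poly_Mapping.lookup (f + h) \<delta> else 0)"
      by (rule \<phi>_sup[OF _ k]) simp
    also have "\<dots> = (\<Sum>\<delta>\<in>?K. (if \<delta> \<in> Comp then Poly_Mapping.lookup f \<delta> else 0) +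
                     (if \<delta> \<in> Comp then Poly_Mapping.lookup h \<delta> else 0))"
      by (rule sum.cong) (simp_all add: lookup_add)
    also have "\<dots> = (\<Sum>\<delta>\<in>?K. (if \<delta> \<in> Comp then Poly_Mapping.lookup f \<delta> else 0)) +
                     (\<Sum>\<delta>\<in>?K. (if \<delta> \<in> Comp then Poly_Mapping.lookup h \<delta> else 0))"
      by (rule sum.distrib)
    also have "\<dots> = \<phi> f + \<phi> h"
      using \<phi>_sup[of ?K f] \<phi>_sup[of ?K h] by simp
    finally show ?thesis .
  qed
  have \<phi>_single: "\<phi> (Poly_Mapping.single \<delta> c) = (if \<delta> \<in> Comp then c else 0)" for \<delta> c
    using \<phi>_sup[of "{\<delta>}" "Poly_Mapping.single \<delta> c"] by simp
  have \<phi>_diff: "\<phi> (f - h) = \<phi> f - \<phi> h" for f h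
    using \<phi>_add[of "f - h" h] by (simp add: algebra_simps)
  have \<phi>_I: "\<phi> x = 0" if "x \<in> ideal_gen (poly_ring S) B" for x
    using that
  proof (induction rule: ideal_gen.induct)
    case zero then show ?case by (simp add: \<phi>_def)
  next
    case (step g b h)
    from step.hyps(2) B obtain \<alpha>' \<gamma>' where b: "b = Poly_Mapping.single \<alpha>' 1 - Poly_Mapping.single \<gamma>' 1"
      and fa': "\<alpha>' \<in> factorizations S" and fc': "\<gamma>' \<in> factorizations S"
      and la: "flen \<alpha>' \<le> d" and lc: "flen \<gamma>' \<le> d"
      unfolding binomials_le_def by blast
    have "b \<in> pi_kernel S" unfolding K by (rule I_gen[OF step.hyps(2)])
    then have "pi_R b = 0" unfolding pi_kernel_def by simp
    then have "Poly_Mapping.single (fact_eval \<alpha>') (1::'r) = Poly_Mapping.single (fact_eval \<gamma>') 1"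
      unfolding b pi_R_diff pi_R_single by simp
    then have ev': "fact_eval \<alpha>' = fact_eval \<gamma>'" by (rule single_inj1)
    have fd: "fdist \<alpha>' \<gamma>' \<le> d" using fdist_le[of \<alpha>' \<gamma>'] la lc by simp
    have r1: "reach S d \<alpha>' \<gamma>'" by (rule reach_one[OF fa' fc' ev' fd])
    have r2: "reach S d \<gamma>' \<alpha>'" by (rule reach_sym[OF r1])
    have iff: "\<beta> + \<alpha>' \<in> Comp \<longleftrightarrow> \<beta> + \<gamma>' \<in> Comp" for \<beta>
    proof
      assume "\<beta> + \<alpha>' \<in> Comp"
      then have ra: "reach S d \<alpha> (\<beta> + \<alpha>')" unfolding Comp_def by simp
      then have "\<beta> + \<alpha>' \<in> factorizations S" using reach_props by blast
      then have "\<beta> \<in> factorizations S" by (rule fact_addD)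
      from reach_trans[OF reach_shift[OF r1 this] ra] show "\<beta> + \<gamma>' \<in> Comp" unfolding Comp_def by simp
    next
      assume "\<beta> + \<gamma>' \<in> Comp"
      then have ra: "reach S d \<alpha> (\<beta> + \<gamma>')" unfolding Comp_def by simp
      then have "\<beta> + \<gamma>' \<in> factorizations S" using reach_props by blast
      then have "\<beta> \<in> factorizations S" by (rule fact_addD)
      from reach_trans[OF reach_shift[OF r2 this] ra] show "\<beta> + \<alpha>' \<in> Comp" unfolding Comp_def by simp
    qed
    have "\<phi> (g * b) = 0" unfolding b
    proof (rule add_hom_binom)
      show "\<phi> (f + h) = \<phi> f + \<phi> h" for f h by (rule \<phi>_add)
      show "\<phi> (Poly_Mapping.single (\<beta> + \<alpha>') c) = \<phi> (Poly_Mapping.single (\<beta> + \<gamma>') c)" for \<beta> c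
        unfolding \<phi>_single using iff[of \<beta>] by simp
    qed
    then show ?case by (simp add: \<phi>_add step.IH)
  qed
  have "Poly_Mapping.single \<alpha> (1::'r) - Poly_Mapping.single \<gamma> 1 \<in> pi_kernel S"
    unfolding pi_kernel_def using fa fc ev
    by (simp add: poly_ring_diff poly_ring_single pi_R_diff pi_R_single)
  then have "\<phi> (Poly_Mapping.single \<alpha> 1 - Poly_Mapping.single \<gamma> 1) = 0" unfolding K by (rule \<phi>_I)
  moreover have "\<alpha> \<in> Comp" unfolding Comp_def using reach.refl[OF fa] by simp
  ultimately have "\<gamma> \<in> Comp" unfolding \<phi>_diff \<phi>_single by (simp split: if_splits)
  then show "reach S d \<alpha> \<gamma>" unfolding Comp_def by simp
qed

lemma nat_subseq_mono:
  fixes s :: "nat \<Rightarrow> nat"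
  shows "\<exists>k::nat\<Rightarrow>nat. strict_mono k \<and> (\<forall>i j. i \<le> j \<longrightarrow> s (k i) \<le> s (k j))"
proof -
  have ex: "\<exists>i. i \<ge> m \<and> (\<forall>j\<ge>m. s i \<le> s j)" for m
  proof -
    from ex_has_least_nat[of "\<lambda>i. i \<ge> m" m s] obtain i where "m \<le> i" "\<forall>y. m \<le> y \<longrightarrow> s i \<le> s y"
      by blast
    then show ?thesis by blast
  qed
  define am where "am m = (SOME i. i \<ge> m \<and> (\<forall>j\<ge>m. s i \<le> s j))" for m
  have am: "am m \<ge> m \<and> (\<forall>j\<ge>m. s (am m) \<le> s j)" for m
    unfolding am_def by (rule someI_ex[OF ex[of m]])
  define k where "k = rec_nat (am 0) (\<lambda>_ p. am (Suc p))"
  have k0: "k 0 = am 0" and kS: "k (Suc n) = am (Suc (k n))" for n unfolding k_def by simp_all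
  have sm: "strict_mono k" unfolding strict_mono_Suc_iff
  proof
    fix n show "k n < k (Suc n)" using am[of "Suc (k n)"] kS[of n] by simp
  qed
  have inv': "\<forall>j\<ge>am m. s (am m) \<le> s j" for m
  proof (intro allI impI)
    fix j assume "am m \<le> j"
    then have "m \<le> j" using am[of m] by linarith
    then show "s (am m) \<le> s j" using am[of m] by blast
  qed
  have inv: "\<forall>j\<ge>k n. s (k n) \<le> s j" for n
  proof (cases n)
    case 0
    then have "k n = am 0" using k0 by simp
    then show ?thesis using inv'[of 0] by simp
  next
    case (Suc m)
    then have "k n = am (Suc (k m))" using kS[of m] by simp
    then show ?thesis using inv'[of "Suc (k m)"] by simp
  qed
  have "\<forall>i j. i \<le> j \<longrightarrow> s (k i) \<le> s (k j)"
  proof (intro allI impI)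
    fix i j :: nat assume ij: "i \<le> j"
    have "k i \<le> k j"
    proof (cases "i = j")
      case True then show ?thesis by simp
    next
      case False
      with ij have "i < j" by simp
      from strict_monoD[OF sm this] show ?thesis by simp
    qed
    then show "s (k i) \<le> s (k j)" using inv[of i] by blast
  qed
  then have all: "\<forall>i j. i \<le> j \<longrightarrow> s (k i) \<le> s (k j)" .
  show ?thesis by (rule exI[of _ k], rule conjI[OF sm all])
qed

lemma dickson:
  fixes A :: "'a set" and f :: "nat \<Rightarrow> 'a \<Rightarrow> nat"
  assumes "finite A"
  shows "\<exists>h::nat\<Rightarrow>nat. strict_mono h \<and> (\<forall>i j. i \<le> j \<longrightarrow> (\<forall>a\<in>A. f (h i) a \<le> f (h j) a))"
  using assms
proof (induction A rule: finite_induct)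
  case empty
  show ?case by (intro exI[of _ "\<lambda>a::nat. a"] conjI) (simp_all add: strict_mono_def)
next
  case (insert a A)
  from insert.IH obtain h :: "nat \<Rightarrow> nat" where h: "strict_mono h"
    and hm: "\<forall>i j. i \<le> j \<longrightarrow> (\<forall>a\<in>A. f (h i) a \<le> f (h j) a)"
    by (elim exE conjE)
  from nat_subseq_mono[of "\<lambda>n. f (h n) a"] obtain k :: "nat \<Rightarrow> nat" where k: "strict_mono k"
    and km: "\<forall>i j. i \<le> j \<longrightarrow> f (h (k i)) a \<le> f (h (k j)) a"
    by (elim exE conjE)
  have hk: "strict_mono (\<lambda>n. h (k n))"
  proof (rule strict_monoI)
    fix x y :: nat assume "x < y"
    then have "k x < k y" by (rule strict_monoD[OF k])
    then show "h (k x) < h (k y)" by (rule strict_monoD[OF h])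
  qed
  have all: "\<forall>i j. i \<le> j \<longrightarrow> (\<forall>b\<in>insert a A. f (h (k i)) b \<le> f (h (k j)) b)"
  proof (intro allI impI ballI)
    fix i j b assume ij: "(i::nat) \<le> j" and b: "b \<in> insert a A"
    have kij: "k i \<le> k j"
    proof (cases "i = j")
      case True then show ?thesis by simp
    next
      case False
      with ij have "i < j" by simp
      from strict_monoD[OF k this] show ?thesis by simp
    qed
    show "f (h (k i)) b \<le> f (h (k j)) b"
    proof (cases "b = a")
      case True
      then show ?thesis using km[rule_format, OF ij] by simp
    next
      case False
      then have "b \<in> A" using b by simp
      then show ?thesis using hm[rule_format, OF kij] by blast
    qed
  qed
  show ?case by (rule exI[of _ "\<lambda>n. h (k n)"], rule conjI[OF hk all])
qed

lemma atoms_sub: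
  assumes red: "reduced_monoid (monoid_gen G)"
  shows "atoms (monoid_gen G) \<subseteq> G"
proof -
  let ?S = "monoid_gen G"
  have U: "x \<in> monoid_units ?S \<Longrightarrow> x = (\<lambda>_. 0)" for x using red unfolding reduced_monoid_def by blast
  have z: "(\<lambda>_. 0) \<in> ?S" by (rule monoid_gen.zero)
  have zz: "(\<lambda>i. (\<lambda>_. 0::int) i + (\<lambda>_. 0::int) i) = (\<lambda>_. 0)" by simp
  have zU: "(\<lambda>_. 0) \<in> monoid_units ?S" unfolding monoid_units_def by (intro CollectI conjI z bexI[of _ "\<lambda>_. 0"]) simp_all
  have main: "x \<in> ?S \<Longrightarrow> x \<in> atoms ?S \<longrightarrow> x \<in> G" for x
  proof (induction rule: monoid_gen.induct)
    case zero
    show ?case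
    proof
      assume "(\<lambda>_. 0) \<in> atoms ?S"
      then have "(\<lambda>_. 0) \<notin> monoid_units ?S" unfolding atoms_def by simp
      with zU show "(\<lambda>_. 0) \<in> G" by simp
    qed
  next
    case (add g x)
    show ?case
    proof
      assume at: "(\<lambda>i. g i + x i) \<in> atoms ?S"
      have gS: "g \<in> ?S" using monoid_gen.add[OF add.hyps(1) monoid_gen.zero] by simp
      have at': "\<forall>b\<in>?S. \<forall>c\<in>?S. (\<lambda>i. g i + x i) = (\<lambda>i. b i + c i) \<longrightarrow> b \<in> monoid_units ?S \<or> c \<in> monoid_units ?S"
        using at unfolding atoms_def by simp
      have "g \<in> monoid_units ?S \<or> x \<in> monoid_units ?S"
        using at'[rule_format, OF gS add.hyps(2) HOL.refl] .
      then have "g = (\<lambda>_. 0) \<or> x = (\<lambda>_. 0)" using U by blast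
      then show "(\<lambda>i. g i + x i) \<in> G"
      proof
        assume "g = (\<lambda>_. 0)"
        then have e: "(\<lambda>i. g i + x i) = x" by simp
        have "x \<in> atoms ?S" using at unfolding e .
        then show ?thesis using add.IH unfolding e by simp
      next
        assume "x = (\<lambda>_. 0)"
        then have "(\<lambda>i. g i + x i) = g" by simp
        then show ?thesis using add.hyps(1) by simp
      qed
    qed
  qed
  show ?thesis
  proof
    fix x assume x: "x \<in> atoms ?S"
    then have "x \<in> ?S" unfolding atoms_def by simp
    with main x show "x \<in> G" by simp
  qed
qed

lemma exists_creach:
  fixes S :: "('n \<Rightarrow> int) set"
  assumes fin: "finite (atoms S)"
  shows "\<exists>d. creach S d"
proof -
  define Q where "Q = {p. fst p \<in> factorizations S \<and> snd p \<in> factorizations S \<and>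
                       fact_eval (fst p) = fact_eval (snd p) \<and> fst p \<noteq> snd p}"
  define le where "le p q \<longleftrightarrow> ple (fst p) (fst q) \<and> ple (snd p) (snd q)" for p q :: "(('n \<Rightarrow> int) \<Rightarrow>\<^sub>0 nat) \<times> (('n \<Rightarrow> int) \<Rightarrow>\<^sub>0 nat)"
  define M where "M = {q \<in> Q. \<forall>p\<in>Q. le p q \<longrightarrow> p = q}"
  define sz where "sz p = flen (fst p) + flen (snd p)" for p :: "(('n \<Rightarrow> int) \<Rightarrow>\<^sub>0 nat) \<times> (('n \<Rightarrow> int) \<Rightarrow>\<^sub>0 nat)"
  have ple_refl: "ple x x" for x :: "('n \<Rightarrow> int) \<Rightarrow>\<^sub>0 nat" unfolding ple_def by simp
  have ple_trans: "ple x y \<Longrightarrow> ple y z \<Longrightarrow> ple x z" for x y z :: "('n \<Rightarrow> int) \<Rightarrow>\<^sub>0 nat"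
    unfolding ple_def using order_trans by blast
  have below: "\<exists>m\<in>M. le m q" if q: "q \<in> Q" for q
  proof -
    have "q \<in> Q \<and> le q q" using q ple_refl unfolding le_def by simp
    from ex_has_least_nat[of "\<lambda>p. p \<in> Q \<and> le p q", OF this, of sz]
    obtain m where m: "m \<in> Q" "le m q" and mmin: "\<forall>p. p \<in> Q \<and> le p q \<longrightarrow> sz m \<le> sz p"
      by blast
    have "m \<in> M" unfolding M_def
    proof (intro CollectI conjI ballI impI m(1))
      fix p assume p: "p \<in> Q" and pm: "le p m"
      have "le p q" using pm m(2) ple_trans unfolding le_def by blast
      with p mmin have "sz m \<le> sz p" by blast
      moreover have "flen (fst p) \<le> flen (fst m)" "flen (snd p) \<le> flen (snd m)"
        using pm unfolding le_def by (simp_all add: ple_flen)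
      ultimately have "flen (fst p) = flen (fst m)" "flen (snd p) = flen (snd m)"
        unfolding sz_def by linarith+
      then have "fst p = fst m" "snd p = snd m" using pm unfolding le_def by (simp_all add: ple_flen_eq)
      then show "p = m" by (rule prod_eqI)
    qed
    then show ?thesis using m(2) by blast
  qed
  have finM: "finite M"
  proof (rule ccontr)
    assume "infinite M"
    then have "\<exists>e :: nat \<Rightarrow> _. inj e \<and> range e \<subseteq> M" by (simp add: infinite_iff_countable_subset)
    then obtain e :: "nat \<Rightarrow> _" where ei: "inj e" and er: "range e \<subseteq> M"
      by (elim exE conjE)
    define F where "F n x = (case x of Inl a \<Rightarrow> Poly_Mapping.lookup (fst (e n)) a
                                    | Inr a \<Rightarrow> Poly_Mapping.lookup (snd (e n)) a)" for n x
    have "finite (Inl ` atoms S \<union> Inr ` atoms S)" using fin by simp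
    from dickson[OF this, of F] obtain h :: "nat \<Rightarrow> nat" where h: "strict_mono h"
      and hm: "\<forall>i j. i \<le> j \<longrightarrow> (\<forall>a\<in>Inl ` atoms S \<union> Inr ` atoms S. F (h i) a \<le> F (h j) a)"
      by (elim exE conjE)
    define p where "p = e (h 0)"
    define q where "q = e (h 1)"
    have "h 0 < h 1" using h by (simp add: strict_monoD)
    have pq: "p \<noteq> q"
    proof
      assume "p = q"
      then have "e (h 0) = e (h 1)" unfolding p_def q_def .
      then have "h 0 = h 1" by (rule injD[OF ei])
      with \<open>h 0 < h 1\<close> show False by simp
    qed
    have pM: "p \<in> M" unfolding p_def using er rangeI[of e "h 0"] by (rule subsetD)
    have qM: "q \<in> M" unfolding q_def using er rangeI[of e "h 1"] by (rule subsetD)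
    have pQ: "p \<in> Q" using pM unfolding M_def by simp
    have qQ: "q \<in> Q" using qM unfolding M_def by simp
    have F01: "F (h 0) x \<le> F (h 1) x" if "x \<in> Inl ` atoms S \<union> Inr ` atoms S" for x
      using hm[rule_format, of 0 1 x] that by simp
    have kp: "Poly_Mapping.keys (fst p) \<subseteq> atoms S" "Poly_Mapping.keys (snd p) \<subseteq> atoms S"
      using pQ unfolding Q_def factorizations_def by simp_all
    have "le p q" unfolding le_def ple_def
    proof (intro conjI allI)
      fix a
      show "Poly_Mapping.lookup (fst p) a \<le> Poly_Mapping.lookup (fst q) a"
      proof (cases "a \<in> atoms S")
        case True
        then have "Inl a \<in> Inl ` atoms S \<union> Inr ` atoms S" by simp
        from F01[OF this] show ?thesis unfolding F_def p_def q_def by simp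
      next
        case False
        then have "a \<notin> Poly_Mapping.keys (fst p)" using kp by blast
        then show ?thesis by (simp add: in_keys_iff)
      qed
      show "Poly_Mapping.lookup (snd p) a \<le> Poly_Mapping.lookup (snd q) a"
      proof (cases "a \<in> atoms S")
        case True
        then have "Inr a \<in> Inl ` atoms S \<union> Inr ` atoms S" by simp
        from F01[OF this] show ?thesis unfolding F_def p_def q_def by simp
      next
        case False
        then have "a \<notin> Poly_Mapping.keys (snd p)" using kp by blast
        then show ?thesis by (simp add: in_keys_iff)
      qed
    qed
    then have "p = q" using qM pQ unfolding M_def by blast
    with pq show False by simp
  qed
  define d where "d = Max (insert 0 ((\<lambda>p. max (flen (fst p)) (flen (snd p))) ` M))"
  have dM: "max (flen (fst p)) (flen (snd p)) \<le> d" if "p \<in> M" for p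
    unfolding d_def using finM that by (intro Max_ge) auto
  have main: "\<forall>\<alpha> \<gamma>. flen \<alpha> + flen \<gamma> = n \<longrightarrow> \<alpha> \<in> factorizations S \<longrightarrow> \<gamma> \<in> factorizations S \<longrightarrow>
      fact_eval \<alpha> = fact_eval \<gamma> \<longrightarrow> reach S d \<alpha> \<gamma>" for n
  proof (induction n rule: less_induct)
    case (less n)
    show ?case
    proof (intro allI impI)
      fix \<alpha> \<gamma> assume n: "flen \<alpha> + flen \<gamma> = n" and fa: "\<alpha> \<in> factorizations S"
        and fc: "\<gamma> \<in> factorizations S" and ev: "fact_eval \<alpha> = fact_eval \<gamma>"
      show "reach S d \<alpha> \<gamma>"
      proof (cases "\<alpha> = \<gamma>")
        case True then show ?thesis using reach.refl[OF fa] by simp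
      next
        case False
        then have "(\<alpha>, \<gamma>) \<in> Q" unfolding Q_def using fa fc ev by simp
        then obtain m where mM: "m \<in> M" and lm: "le m (\<alpha>, \<gamma>)" using below by blast
        obtain \<alpha>' \<gamma>' where m: "m = (\<alpha>', \<gamma>')" by (cases m)
        have mQ: "m \<in> Q" using mM unfolding M_def by simp
        then have fa': "\<alpha>' \<in> factorizations S" and fc': "\<gamma>' \<in> factorizations S"
          and ev': "fact_eval \<alpha>' = fact_eval \<gamma>'" and ne': "\<alpha>' \<noteq> \<gamma>'"
          unfolding Q_def m by simp_all
        have la: "ple \<alpha>' \<alpha>" and lc: "ple \<gamma>' \<gamma>" using lm unfolding le_def m by simp_all
        define \<beta> where "\<beta> = \<alpha> - \<alpha>'"
        define \<delta> where "\<delta> = \<gamma> - \<gamma>'"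
        have a_eq: "\<alpha> = \<alpha>' + \<beta>" unfolding \<beta>_def by (rule ple_decomp[OF la])
        have c_eq: "\<gamma> = \<gamma>' + \<delta>" unfolding \<delta>_def by (rule ple_decomp[OF lc])
        have fb: "\<beta> \<in> factorizations S" unfolding \<beta>_def by (rule fact_minus[OF fa])
        have fd: "\<delta> \<in> factorizations S" unfolding \<delta>_def by (rule fact_minus[OF fc])
        have "fact_eval (\<alpha>' + \<beta>) = fact_eval (\<alpha>' + \<delta>)"
        proof -
          have "fact_eval (\<alpha>' + \<beta>) = fact_eval (\<gamma>' + \<delta>)" using ev a_eq c_eq by simp
          also have "\<dots> = fact_eval (\<alpha>' + \<delta>)" unfolding fe_add ev' ..
          finally show ?thesis .
        qed
        then have evbd: "fact_eval \<beta> = fact_eval \<delta>" by (rule fe_cancel)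
        have pos: "flen \<alpha>' + flen \<gamma>' > 0"
        proof (rule ccontr)
          assume "\<not> flen \<alpha>' + flen \<gamma>' > 0"
          then have "flen \<alpha>' = 0" "flen \<gamma>' = 0" by simp_all
          then have "\<alpha>' = 0" "\<gamma>' = 0" using flen0 by blast+
          with ne' show False by simp
        qed
        have "flen \<alpha> = flen \<alpha>' + flen \<beta>" by (subst a_eq) (rule flen_add)
        moreover have "flen \<gamma> = flen \<gamma>' + flen \<delta>" by (subst c_eq) (rule flen_add)
        ultimately have lt: "flen \<beta> + flen \<delta> < n" using n pos by linarith
        have rbd: "reach S d \<beta> \<delta>" by (rule less.IH[OF lt, rule_format, OF HOL.refl fb fd evbd])
        have fdm: "fdist \<alpha>' \<gamma>' \<le> d"
          using fdist_le[of \<alpha>' \<gamma>'] dM[OF mM] unfolding m by (simp add: max_def split: if_splits)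
        have r1: "reach S d \<alpha>' \<gamma>'" by (rule reach_one[OF fa' fc' ev' fdm])
        have s1: "reach S d (\<beta> + \<alpha>') (\<beta> + \<gamma>')" by (rule reach_shift[OF r1 fb])
        have s2: "reach S d (\<gamma>' + \<beta>) (\<gamma>' + \<delta>)" by (rule reach_shift[OF rbd fc'])
        have "reach S d (\<beta> + \<alpha>') (\<gamma>' + \<delta>)"
          using reach_trans[OF s2] s1 by (simp add: add.commute)
        then show ?thesis using a_eq c_eq by (simp add: add.commute)
      qed
    qed
  qed
  have "creach S d" unfolding creach_def
  proof (intro ballI impI)
    fix \<alpha> \<gamma> assume "\<alpha> \<in> factorizations S" "\<gamma> \<in> factorizations S" "fact_eval \<alpha> = fact_eval \<gamma>"
    then show "reach S d \<alpha> \<gamma>" using main[of "flen \<alpha> + flen \<gamma>"] by blast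
  qed
  then show ?thesis by (rule exI)
qed

theorem corollary2p6:
  fixes S :: "('n::finite \<Rightarrow> int) set"
  assumes "affine_monoid S" and "reduced_monoid S"
  shows "kernel_binom_gen TYPE('r::comm_ring_1) S (catenary_degree S)
       \<and> (\<forall>d. kernel_binom_gen TYPE('r) S d \<longrightarrow> catenary_degree S \<le> d)
       \<and> (\<forall>d. kernel_binom_gen TYPE('r) S d \<longleftrightarrow> kernel_binom_gen TYPE('q::comm_ring_1) S d)"
proof -
  from assms(1) obtain G where fG: "finite G" and SG: "S = monoid_gen G"
    unfolding affine_monoid_def by blast
  have "atoms S \<subseteq> G" unfolding SG by (rule atoms_sub) (use assms(2) SG in simp)
  then have finA: "finite (atoms S)" using fG by (rule finite_subset)
  obtain d0 where "creach S d0" using exists_creach[OF finA] by blast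
  then have c0: "catenary_ok S d0" by (simp add: catenary_creach)
  have cc: "catenary_ok S (catenary_degree S)" unfolding catenary_degree_def by (rule LeastI[of "catenary_ok S" d0, OF c0])
  have eqr: "kernel_binom_gen TYPE('r) S d \<longleftrightarrow> creach S d" for d
  proof
    assume "kernel_binom_gen TYPE('r) S d" then show "creach S d" by (rule gen_creach)
  next
    assume "creach S d" then show "kernel_binom_gen TYPE('r) S d" by (rule creach_gen)
  qed
  have eqq: "kernel_binom_gen TYPE('q) S d \<longleftrightarrow> creach S d" for d
  proof
    assume "kernel_binom_gen TYPE('q) S d" then show "creach S d" by (rule gen_creach)
  next
    assume "creach S d" then show "kernel_binom_gen TYPE('q) S d" by (rule creach_gen)
  qed
  show ?thesis
  proof (intro conjI allI impI)
    show "kernel_binom_gen TYPE('r) S (catenary_degree S)"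
      unfolding eqr using cc by (simp add: catenary_creach)
  next
    fix d assume "kernel_binom_gen TYPE('r) S d"
    then have "catenary_ok S d" unfolding eqr by (simp add: catenary_creach)
    then show "catenary_degree S \<le> d" unfolding catenary_degree_def by (rule Least_le)
  next
    fix d show "kernel_binom_gen TYPE('r) S d \<longleftrightarrow> kernel_binom_gen TYPE('q) S d"
      unfolding eqr eqq ..
  qed
qed

end
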